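(* In the setting of the context, let $X^{m,s}$ be a diffusion and suppose $u_{m,s}(x,\theta)$ is strictly supermodular and twice continuously differentiable. If $\psi_{m,s}$ is $u_{m,s}$-subdifferentiable, then the indifference index $\theta^*$ satisfies, at $x\in\mathrm{int}(I^m)$ (where $\psi_{m,s}$ is differentiable), $\psi_{m,s}'(x)=\frac{\partial}{\partial x}u_{m,s}(x,\theta^*(x))$. Moreover, $\theta^*$ is non-decreasing.
   Context: Fix $\rho>0$, an interval $\Theta$, a starting point $X_0$, a terminal reward $G(x,\theta)$ and a running reward $c(x)$. For a speed measure $m$ and a strictly increasing continuous scale function $s$, $X^{m,s}$ denotes the regular one-dimensional generalised diffusion with speed measure $m$ and scale $s$ on its state space $I^m$ started at $X_0$ (either both endpoints non-reflecting, or started at a reflecting endpoint with the other non-reflecting); $\mathrm{int}(I^m)$ is the interior plus accessible boundary points. $\varphi_{m,s}$ is the increasing positive solution of $\frac12\frac{d}{dm}\frac{d}{ds}f=\rho f$ with $\varphi_{m,s}(X_0)=1$, $\psi_{m,s}=\log\varphi_{m,s}$, $R_{m,s}(x)=\mathbb{E}_x[\int_0^\infty e^{-\rho t}c(X^{m,s}_t)dt]$, and $u_{m,s}(x,\theta)=\log(G(x,\theta)-R_{m,s}(x))$. For $f$ defined on $A$ and $u:A\times B\to\mathbb{R}$, the $u$-subdifferential of $f$ at $y$ is $\partial^uf(y)=\{z\in B:u(y,z)-f(y)\ge u(\hat y,z)-f(\hat y)\ \forall\hat y\in A\}$, and $f$ is $u$-subdifferentiable if $\partial^uf(y)\neq\emptyset$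 for all $y\in A$; here $A=\mathrm{int}(I^m)$, $B=\Theta$. Strict supermodularity of $u$: $u(y',z)-u(y,z)$ strictly increasing in $z$ for $y'>y$. The indifference index $\theta^*(x)$ is a parameter $\theta$ for which it is optimal to stop immediately when the diffusion starts at $x$, i.e. $\theta^*(x)\in\partial^{u_{m,s}}\psi_{m,s}(x)$ (so that $x$ maximises $x'\mapsto u_{m,s}(x',\theta)-\psi_{m,s}(x')$). *)

theory Defs
  imports "HOL-Analysis.Analysis"
begin

definition u_subdiff ::
  "(real \<Rightarrow> real \<Rightarrow> real) \<Rightarrow> real set \<Rightarrow> real set \<Rightarrow> (real \<Rightarrow> real) \<Rightarrow> real \<Rightarrow> real set" where
  "u_subdiff u A B f y =
     {z \<in> B. \<forall>yh \<in> A. u y z - f y \<ge> u yh z - f yh}"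

definition u_subdifferentiable ::
  "(real \<Rightarrow> real \<Rightarrow> real) \<Rightarrow> real set \<Rightarrow> real set \<Rightarrow> (real \<Rightarrow> real) \<Rightarrow> bool" where
  "u_subdifferentiable u A B f \<longleftrightarrow> (\<forall>y \<in> A. u_subdiff u A B f y \<noteq> {})"

definition strictly_supermodular ::
  "(real \<Rightarrow> real \<Rightarrow> real) \<Rightarrow> real set \<Rightarrow> real set \<Rightarrow> bool" where
  "strictly_supermodular u A B \<longleftrightarrow>
     (\<forall>y \<in> A. \<forall>y' \<in> A. \<forall>z \<in> B. \<forall>z' \<in> B.
        y < y' \<longrightarrow> z < z' \<longrightarrow> u y' z - u y z < u y' z' - u y z')"

definition C2_on :: "(real \<Rightarrow> real \<Rightarrow> real) \<Rightarrow> (real \<times> real) set \<Rightarrow> bool" where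
  "C2_on u S \<longleftrightarrow>
     (\<exists>ux uy uxx uxy uyx uyy :: real \<times> real \<Rightarrow> real.
        (\<forall>p \<in> S. ((\<lambda>q. u (fst q) (snd q)) has_derivative
                     (\<lambda>h. ux p * fst h + uy p * snd h)) (at p within S)) \<and>
        (\<forall>p \<in> S. (ux has_derivative (\<lambda>h. uxx p * fst h + uxy p * snd h)) (at p within S)) \<and>
        (\<forall>p \<in> S. (uy has_derivative (\<lambda>h. uyx p * fst h + uyy p * snd h)) (at p within S)) \<and>
        continuous_on S uxx \<and> continuous_on S uxy \<and>
        continuous_on S uyx \<and> continuous_on S uyy)"

end

theory Submission
  imports Defs
begin

theorem corollary4p8:
  fixes u :: "real \<Rightarrow> real \<Rightarrow> real"
    and psi :: "real \<Rightarrow> real"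
    and A \<Theta> :: "real set"
    and theta_star :: "real \<Rightarrow> real"
  assumes A_int: "is_interval A"
    and Theta_int: "is_interval \<Theta>"
    and supermod: "strictly_supermodular u A \<Theta>"
    and C2: "C2_on u (A \<times> \<Theta>)"
    and subdiff: "u_subdifferentiable u A \<Theta> psi"
    and index: "\<forall>x \<in> A. theta_star x \<in> u_subdiff u A \<Theta> psi x"
  shows "(\<forall>x \<in> interior A. psi differentiable (at x) \<longrightarrow>
            deriv psi x = deriv (\<lambda>y. u y (theta_star x)) x)
         \<and> (\<forall>x \<in> A. \<forall>y \<in> A. x \<le> y \<longrightarrow> theta_star x \<le> theta_star y)"
proof (intro conjI ballI impI)
  fix x y assume xA: "x \<in> A" and yA: "y \<in> A" and xy: "x \<le> y"
  show "theta_star x \<le> theta_star y"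
  proof (rule ccontr)
    assume "\<not> ?thesis"
    hence lt: "theta_star y < theta_star x" by simp
    have ix: "theta_star x \<in> \<Theta>" "\<forall>yh\<in>A. u x (theta_star x) - psi x \<ge> u yh (theta_star x) - psi yh"
      using index xA unfolding u_subdiff_def by auto
    have iy: "theta_star y \<in> \<Theta>" "\<forall>yh\<in>A. u y (theta_star y) - psi y \<ge> u yh (theta_star y) - psi yh"
      using index yA unfolding u_subdiff_def by auto
    have "x \<noteq> y" using lt by auto
    with xy have "x < y" by simp
    hence "u y (theta_star y) - u x (theta_star y) < u y (theta_star x) - u x (theta_star x)"
      using supermod xA yA ix(1) iy(1) lt unfolding strictly_supermodular_def by blast
    moreover have "u x (theta_star x) - psi x \<ge> u y (theta_star x) - psi y" using ix(2) yA by blast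
    moreover have "u y (theta_star y) - psi y \<ge> u x (theta_star y) - psi x" using iy(2) xA by blast
    ultimately show False by linarith
  qed
next
  fix x assume xi: "x \<in> interior A" and dpsi: "psi differentiable (at x)"
  have xA: "x \<in> A" using xi interior_subset by blast
  define th where "th = theta_star x"
  have thT: "th \<in> \<Theta>" and opt: "\<forall>yh\<in>A. u x th - psi x \<ge> u yh th - psi yh"
    using index xA unfolding u_subdiff_def th_def by auto
  obtain ux uy where D: "\<forall>p \<in> A \<times> \<Theta>. ((\<lambda>q. u (fst q) (snd q)) has_derivative
                     (\<lambda>h. ux p * fst h + uy p * snd h)) (at p within A \<times> \<Theta>)"
    using C2 unfolding C2_on_def by blast
  have D1: "((\<lambda>q. u (fst q) (snd q)) has_derivative (\<lambda>h. ux (x,th) * fst h + uy (x,th) * snd h))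
      (at (x,th) within A \<times> \<Theta>)" using D xA thT by auto
  have P: "((\<lambda>y. (y, th)) has_derivative (\<lambda>h. (h, 0))) (at x within A)"
    by (intro derivative_eq_intros) auto
  have img: "(\<lambda>y. (y, th)) ` A \<subseteq> A \<times> \<Theta>" using thT by auto
  have D2: "((\<lambda>q. u (fst q) (snd q)) has_derivative (\<lambda>h. ux (x,th) * fst h + uy (x,th) * snd h))
      (at (x,th) within (\<lambda>y. (y, th)) ` A)" using has_derivative_subset[OF D1 img] .
  have "(((\<lambda>q. u (fst q) (snd q)) \<circ> (\<lambda>y. (y, th))) has_derivative
     ((\<lambda>h. ux (x,th) * fst h + uy (x,th) * snd h) \<circ> (\<lambda>h. (h, 0)))) (at x within A)"
    by (rule diff_chain_within[OF P D2])
  hence "((\<lambda>y. u y th) has_derivative (\<lambda>h. ux (x,th) * h)) (at x within A)"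
    by (simp add: o_def mult.commute)
  hence "((\<lambda>y. u y th) has_derivative (\<lambda>h. ux (x,th) * h)) (at x)"
    using at_within_interior[OF xi] by simp
  hence du: "((\<lambda>y. u y th) has_real_derivative ux (x,th)) (at x)"
    by (simp add: has_field_derivative_def mult.commute[of _ "ux (x,th)"])
  obtain dp where dp: "(psi has_real_derivative dp) (at x)"
    using dpsi real_differentiable_def by (metis differentiable_def has_derivative_imp_has_field_derivative)
  have dg: "((\<lambda>y. u y th - psi y) has_real_derivative ux (x,th) - dp) (at x)"
    using du dp by (rule DERIV_diff)
  obtain e where e: "e > 0" "ball x e \<subseteq> A" using xi by (meson mem_interior)
  have "ux (x,th) - dp = 0"
  proof (rule DERIV_local_max[OF dg e(1)])
    show "\<forall>y. \<bar>x - y\<bar> < e \<longrightarrow> u y th - psi y \<le> u x th - psi x"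
      using opt e(2) by (auto simp: dist_real_def subset_iff)
  qed
  hence "deriv psi x = ux (x,th)" using DERIV_imp_deriv[OF dp] by simp
  also have "\<dots> = deriv (\<lambda>y. u y th) x" using DERIV_imp_deriv[OF du] by simp
  finally show "deriv psi x = deriv (\<lambda>y. u y (theta_star x)) x" by (simp add: th_def)
qed

end
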